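(* Let $\mathcal{C}$ be a self-dual CSS code on $n$ qubits (i.e., its $X$-type and $Z$-type stabilizer groups are $\{X_S : S\in\mathcal{S}\}$ and $\{Z_S : S \in \mathcal{S}\}$ for the same family $\mathcal S$ of subsets of $\{1,\dots,n\}$). Let $\sigma$ be a permutation of $\{1,\dots,n\}$ such that permuting the qubits by $\sigma$ maps the code space to itself. Let $U = \prod_{i:\, \sigma(i)\neq i} \mathrm{CZ}_{i,\sigma(i)}$ (one $\mathrm{CZ}$ gate for each such $i$, so that for a $2$-cycle $(i,j)$ of $\sigma$ the two gates $\mathrm{CZ}_{i,j}$ and $\mathrm{CZ}_{j,i}$ both appear). Then there is a Pauli operator $P$ that is a product of $Z$ operators such that $PU$ maps the code space to itself.
   Context: $\mathrm{CZ}_{a,b} = \mathbb 1 - 2|11\rangle\langle 11|$ on qubits $a,b$; it is symmetric in $a,b$. $X_S = \prod_{i\in S} X_i$, $Z_S = \prod_{i\in S}Z_i$. *)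

theory Defs
  imports Complex_Main "HOL-Combinatorics.Permutations"
begin

text \<open>n-qubit states on qubits 1..n: a computational basis state is given by the
set x of qubits in state 1; a state is a complex amplitude function on such sets,
vanishing outside subsets of {1..n}.\<close>

type_synonym state = "nat set \<Rightarrow> complex"

definition states :: "nat \<Rightarrow> state set" where
  "states n = {\<psi>. \<forall>x. \<not> x \<subseteq> {1..n} \<longrightarrow> \<psi> x = 0}"

definition X_op :: "nat set \<Rightarrow> state \<Rightarrow> state" where
  "X_op S \<psi> = (\<lambda>x. \<psi> ((x - S) \<union> (S - x)))"

definition Z_op :: "nat set \<Rightarrow> state \<Rightarrow> state" where
  "Z_op S \<psi> = (\<lambda>x. (-1) ^ card (x \<inter> S) * \<psi> x)"

text \<open>Permutation of qubits: basis state |x> goes to |sigma(x)>.\<close>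
definition perm_op :: "(nat \<Rightarrow> nat) \<Rightarrow> state \<Rightarrow> state" where
  "perm_op \<sigma> \<psi> = (\<lambda>y. \<psi> (inv \<sigma> ` y))"

definition cz_phase :: "nat \<Rightarrow> nat \<Rightarrow> nat set \<Rightarrow> complex" where
  "cz_phase a b x = (if a \<in> x \<and> b \<in> x then -1 else 1)"

definition CZ :: "nat \<Rightarrow> nat \<Rightarrow> state \<Rightarrow> state" where
  "CZ a b \<psi> = (\<lambda>x. cz_phase a b x * \<psi> x)"

text \<open>All factors are
diagonal in the computational basis, so the product is the diagonal operator whose
phase is the product of the individual phases.\<close>
definition U_op :: "nat \<Rightarrow> (nat \<Rightarrow> nat) \<Rightarrow> state \<Rightarrow> state" where
  "U_op n \<sigma> \<psi> = (\<lambda>x. (\<Prod>i\<in>{i\<in>{1..n}. \<sigma> i \<noteq> i}. cz_phase i (\<sigma> i) x) * \<psi> x)"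

text \<open>Self-dual CSS code: stabilizer group {X_S, Z_S : S in family} where the family is
a group under symmetric difference of subsets of {1..n}, and X_S, Z_T commute.\<close>
definition self_dual_css :: "nat \<Rightarrow> nat set set \<Rightarrow> bool" where
  "self_dual_css n \<S> \<longleftrightarrow>
     (\<forall>S\<in>\<S>. S \<subseteq> {1..n}) \<and> {} \<in> \<S> \<and>
     (\<forall>S\<in>\<S>. \<forall>T\<in>\<S>. (S - T) \<union> (T - S) \<in> \<S>) \<and>
     (\<forall>S\<in>\<S>. \<forall>T\<in>\<S>. even (card (S \<inter> T)))"

definition code_space :: "nat \<Rightarrow> nat set set \<Rightarrow> state set" where
  "code_space n \<S> = {\<psi> \<in> states n. \<forall>S\<in>\<S>. X_op S \<psi> = \<psi> \<and> Z_op S \<psi> = \<psi>}"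

end

theory Submission
  imports Defs
begin

lemma prod_sign:
  "finite A \<Longrightarrow> (\<Prod>i\<in>A. if P i then (-1::complex) else 1) = (-1)^card {i\<in>A. P i}"
  by (simp add: prod.inter_filter[symmetric])

lemma symdiff_twice: "(((x::'a set) - S) \<union> (S - x) - S) \<union> (S - ((x - S) \<union> (S - x))) = x"
  by auto

theorem claim2:
  fixes n :: nat and \<S> :: "nat set set" and \<sigma> :: "nat \<Rightarrow> nat"
  assumes "self_dual_css n \<S>"
    and "\<sigma> permutes {1..n}"
    and "\<forall>\<psi>\<in>code_space n \<S>. perm_op \<sigma> \<psi> \<in> code_space n \<S>"
  shows "\<exists>T. T \<subseteq> {1..n} \<and>
           (\<forall>\<psi>\<in>code_space n \<S>. Z_op T (U_op n \<sigma> \<psi>) \<in> code_space n \<S>)"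
proof -
  from assms(1) have sub: "\<forall>S\<in>\<S>. S \<subseteq> {1..n}" and emp: "{} \<in> \<S>"
    and grp: "\<forall>S\<in>\<S>. \<forall>T\<in>\<S>. (S - T) \<union> (T - S) \<in> \<S>"
    and ev: "\<forall>S\<in>\<S>. \<forall>T\<in>\<S>. even (card (S \<inter> T))"
    unfolding self_dual_css_def by auto
  have bij: "bij \<sigma>" using assms(2) permutes_bij by blast
  define \<psi>0 where "\<psi>0 = (\<lambda>x. if x \<in> \<S> then (1::complex) else 0)"
  have mem: "((x - S) \<union> (S - x) \<in> \<S>) = (x \<in> \<S>)" if "S \<in> \<S>" for x S
  proof
    assume "(x - S) \<union> (S - x) \<in> \<S>"
    from grp[rule_format, OF this that] show "x \<in> \<S>" by (simp only: symdiff_twice)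
  next
    assume "x \<in> \<S>" from grp[rule_format, OF this that] show "(x - S) \<union> (S - x) \<in> \<S>" .
  qed
  have \<psi>0c: "\<psi>0 \<in> code_space n \<S>"
    unfolding code_space_def states_def
  proof (intro CollectI conjI allI impI ballI)
    fix x assume "\<not> x \<subseteq> {1..n}" then show "\<psi>0 x = 0" using sub unfolding \<psi>0_def by auto
  next
    fix S assume S: "S \<in> \<S>"
    show "X_op S \<psi>0 = \<psi>0" unfolding X_op_def \<psi>0_def using mem[OF S] by auto
    show "Z_op S \<psi>0 = \<psi>0" unfolding Z_op_def \<psi>0_def
    proof
      fix x show "(- 1) ^ card (x \<inter> S) * (if x \<in> \<S> then 1 else 0) = (if x \<in> \<S> then (1::complex) else 0)"
        using ev S by (auto simp: power_minus_odd)
    qed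
  qed
  have inv_in: "inv \<sigma> ` S \<in> \<S>" if S: "S \<in> \<S>" for S
  proof -
    have c: "perm_op \<sigma> \<psi>0 \<in> code_space n \<S>" using assms(3) \<psi>0c by blast
    then have "X_op S (perm_op \<sigma> \<psi>0) = perm_op \<sigma> \<psi>0" using S unfolding code_space_def by blast
    then have "X_op S (perm_op \<sigma> \<psi>0) {} = perm_op \<sigma> \<psi>0 {}" by simp
    then show ?thesis unfolding X_op_def perm_op_def \<psi>0_def using emp
      by (auto split: if_splits)
  qed
  have fin: "finite \<S>"
    using sub by (meson Pow_iff finite_Pow_iff finite_atLeastAtMost finite_subset subsetI)
  have injinv: "inj (inv \<sigma>)" using bij bij_imp_bij_inv bij_is_inj by blast
  have img: "(\<lambda>S. inv \<sigma> ` S) ` \<S> = \<S>"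
    apply (rule endo_inj_surj[OF fin])
    using inv_in apply blast
    using injinv by (meson inj_image_eq_iff inj_onI)
  have fwd: "\<sigma> ` S \<in> \<S>" if S: "S \<in> \<S>" for S
  proof -
    from S img obtain S' where S': "S' \<in> \<S>" "S = inv \<sigma> ` S'" by blast
    have "\<sigma> ` S = S'" using S'(2) bij
      by (simp add: image_comp bij_is_surj surj_iff[THEN iffD1] o_def surj_f_inv_f)
    with S' show ?thesis by simp
  qed
  define T where "T = {i\<in>{1..n}. \<sigma> i = i}"
  define P where "P a b = (\<Prod>i\<in>{1..n}. if i\<in>a \<and> \<sigma> i\<in>b then (-1::complex) else 1)" for a b
  have Peven: "P a b = 1" if "even (card {i\<in>{1..n}. i\<in>a \<and> \<sigma> i\<in>b})" for a b
    unfolding P_def using that by (simp add: prod_sign)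
  have Pbil: "P ((y-S)\<union>(S-y)) ((y-S)\<union>(S-y)) = P y y * P y S * P S y * P S S" for y S
    unfolding P_def prod.distrib[symmetric] by (rule prod.cong) auto
  have phase: "Z_op T (U_op n \<sigma> \<psi>) = (\<lambda>y. P y y * \<psi> y)" if "\<psi> \<in> states n" for \<psi>
  proof
    fix y
    show "Z_op T (U_op n \<sigma> \<psi>) y = P y y * \<psi> y"
    proof (cases "y \<subseteq> {1..n}")
      case False then show ?thesis using that unfolding states_def Z_op_def U_op_def by auto
    next
      case True
      have e1: "(-1::complex) ^ card (y \<inter> T) = (\<Prod>i\<in>{1..n}. if \<sigma> i = i \<and> i \<in> y then -1 else 1)"
      proof -
        have "y \<inter> T = {i\<in>{1..n}. \<sigma> i = i \<and> i \<in> y}" using True unfolding T_def by auto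
        then show ?thesis by (simp add: prod_sign)
      qed
      have e2: "(\<Prod>i\<in>{i\<in>{1..n}. \<sigma> i \<noteq> i}. cz_phase i (\<sigma> i) y)
          = (\<Prod>i\<in>{1..n}. if \<sigma> i \<noteq> i then (if i \<in> y \<and> \<sigma> i \<in> y then -1 else 1) else 1)"
        unfolding cz_phase_def by (rule prod.inter_filter) simp
      have e3: "(-1::complex) ^ card (y \<inter> T) * (\<Prod>i\<in>{i\<in>{1..n}. \<sigma> i \<noteq> i}. cz_phase i (\<sigma> i) y) = P y y"
        unfolding e1 e2 P_def prod.distrib[symmetric] by (rule prod.cong) auto
      show ?thesis unfolding Z_op_def U_op_def using e3 by (simp add: mult.assoc[symmetric])
    qed
  qed
  show ?thesis
  proof (intro exI conjI ballI)
    show "T \<subseteq> {1..n}" unfolding T_def by auto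
  next
    fix \<psi> assume \<psi>: "\<psi> \<in> code_space n \<S>"
    then have st: "\<psi> \<in> states n" and X: "\<And>S. S \<in> \<S> \<Longrightarrow> X_op S \<psi> = \<psi>"
      and Z: "\<And>S. S \<in> \<S> \<Longrightarrow> Z_op S \<psi> = \<psi>"
      unfolding code_space_def by auto
    have Zp: "(-1::complex) ^ card (y \<inter> S) * \<psi> y = \<psi> y" if "S \<in> \<S>" for S y
      using fun_cong[OF Z[OF that], of y] unfolding Z_op_def .
    have perp: "even (card (y \<inter> S))" if "S \<in> \<S>" "\<psi> y \<noteq> 0" for S y
    proof (rule ccontr)
      assume "odd (card (y \<inter> S))"
      then have "(-1::complex) ^ card (y \<inter> S) = -1" by simp
      with Zp[OF that(1), of y] that(2) show False by simp
    qed
    have inside: "y \<subseteq> {1..n}" if "\<psi> y \<noteq> 0" for y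
      using st that unfolding states_def by blast
    show "Z_op T (U_op n \<sigma> \<psi>) \<in> code_space n \<S>"
      unfolding phase[OF st] code_space_def
    proof (intro CollectI conjI ballI)
      show "(\<lambda>y. P y y * \<psi> y) \<in> states n" using st unfolding states_def by auto
    next
      fix S assume S: "S \<in> \<S>"
      show "Z_op S (\<lambda>y. P y y * \<psi> y) = (\<lambda>y. P y y * \<psi> y)"
        unfolding Z_op_def
      proof
        fix y show "(- 1) ^ card (y \<inter> S) * (P y y * \<psi> y) = P y y * \<psi> y"
          using Zp[OF S, of y] by (metis mult.left_commute)
      qed
      show "X_op S (\<lambda>y. P y y * \<psi> y) = (\<lambda>y. P y y * \<psi> y)"
        unfolding X_op_def
      proof
        fix y
        have \<psi>eq: "\<psi> ((y - S) \<union> (S - y)) = \<psi> y" using fun_cong[OF X[OF S], of y] unfolding X_op_def .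
        show "P ((y - S) \<union> (S - y)) ((y - S) \<union> (S - y)) * \<psi> ((y - S) \<union> (S - y)) = P y y * \<psi> y"
        proof (cases "\<psi> y = 0")
          case True then show ?thesis using \<psi>eq by simp
        next
          case False
          have yin: "y \<subseteq> {1..n}" using inside False by blast
          have Sin: "S \<subseteq> {1..n}" using sub S by blast
          have vim: "\<sigma> -` A = inv \<sigma> ` A" for A using bij bij_vimage_eq_inv_image by blast
          have a1: "{i\<in>{1..n}. i\<in>y \<and> \<sigma> i\<in>S} = y \<inter> inv \<sigma> ` S"
            using yin vim[of S] by auto
          have a2: "{i\<in>{1..n}. i\<in>S \<and> \<sigma> i\<in>S} = S \<inter> inv \<sigma> ` S"
            using Sin vim[of S] by auto
          have a3: "{i\<in>{1..n}. i\<in>S \<and> \<sigma> i\<in>y} = S \<inter> \<sigma> -` y"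
            using Sin by auto
          have c3: "card (S \<inter> \<sigma> -` y) = card (y \<inter> \<sigma> ` S)"
          proof -
            have "card (S \<inter> \<sigma> -` y) = card (\<sigma> ` (S \<inter> \<sigma> -` y))"
              using bij bij_is_inj card_image[symmetric] inj_on_subset by (metis subset_UNIV)
            also have "\<sigma> ` (S \<inter> \<sigma> -` y) = y \<inter> \<sigma> ` S" using bij bij_is_surj by (auto dest: surjD)
            finally show ?thesis .
          qed
          have "P y S = 1" by (rule Peven) (unfold a1, rule perp[OF inv_in[OF S] False])
          moreover have "P S S = 1" by (rule Peven) (unfold a2, rule ev[rule_format, OF S inv_in[OF S]])
          moreover have "P S y = 1" by (rule Peven) (unfold a3 c3, rule perp[OF fwd[OF S] False])
          ultimately show ?thesis using Pbil \<psi>eq by simp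
        qed
      qed
    qed
  qed
qed

end
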